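(* Let $T_1,T_2>0$ and $0<\tau<2\min(T_1,T_2)$. Let $R_1=\tau/\sqrt2$, $R_2=R_1+\tau$, $c_0=(T_1+\tau/2+R_1,\,T_2+\tau/2+R_1)$. For $p=(p_1,p_2)\in\mathbb{R}^2$ define the regions $S_{1,\alpha}=\{T_1+\tfrac\tau2<p_1<T_1+\tfrac\tau2+R_1,\ T_2+\tfrac\tau2<p_2<T_2+\tfrac\tau2+R_1,\ \|p-c_0\|<R_1\}$, $S_{1,1}=\{T_1+\tfrac\tau2<p_1<T_1+\tfrac\tau2+R_1,\ p_2>T_2+\tfrac\tau2+R_1\}$, $S_{1,2}=\{T_2+\tfrac\tau2<p_2<T_2+\tfrac\tau2+R_1,\ p_1>T_1+\tfrac\tau2+R_1\}$, $S_{1,3}=\{p_1>T_1+\tfrac\tau2+R_1,\ p_2>T_2+\tfrac\tau2+R_1\}$, $S_{0,\alpha}=\{p_1\le T_1+\tfrac\tau2+R_1,\ p_2\le T_2+\tfrac\tau2+R_1,\ \|p-c_0\|>R_2\}$, $S_{0,1}=\{p_1\le T_1-\tfrac\tau2,\ p_2>T_2+\tfrac\tau2+R_1\}$, $S_{0,2}=\{p_2\le T_2-\tfrac\tau2,\ p_1>T_1+\tfrac\tau2+R_1\}$, $S_{\tau,\alpha}=\{p_1\le T_1+\tfrac\tau2+R_1,\ p_2\le T_2+\tfrac\tau2+R_1,\ R_1\le\|p-c_0\|\le R_2\}$, $S_{\tau,1}=\{T_1-\tfrac\tau2\le p_1\le T_1+\tfrac\tau2,\ p_2>T_2+\tfrac\tau2+R_1\}$,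 $S_{\tau,2}=\{T_2-\tfrac\tau2\le p_2\le T_2+\tfrac\tau2,\ p_1>T_1+\tfrac\tau2+R_1\}$, and define $f_\tau(p)=1$ on $S_{1,\alpha}\cup S_{1,1}\cup S_{1,2}\cup S_{1,3}$, $f_\tau(p)=0$ on $S_{0,\alpha}\cup S_{0,1}\cup S_{0,2}$, $f_\tau(p)=\frac{R_2-\|p-c_0\|}{\tau}$ on $S_{\tau,\alpha}$, $f_\tau(p)=\frac{p_1-(T_1-\tau/2)}{\tau}$ on $S_{\tau,1}$, $f_\tau(p)=\frac{p_2-(T_2-\tau/2)}{\tau}$ on $S_{\tau,2}$. Then $f_\tau$ is $\frac1\tau$-Lipschitz with respect to the Euclidean norm: $|f_\tau(x)-f_\tau(x')|\le\frac1\tau\|x-x'\|$ for all $x,x'$ in the union of these regions.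
   Context: $\|\cdot\|$ is the Euclidean norm on $\mathbb{R}^2$. *)

theory Defs
  imports "HOL-Analysis.Analysis"
begin

text \<open>Points of R^2 are pairs (p1,p2) :: real \<times> real; the norm on the product type
is the Euclidean norm sqrt(p1^2+p2^2).\<close>

definition R1 :: "real \<Rightarrow> real" where "R1 \<tau> = \<tau> / sqrt 2"
definition R2 :: "real \<Rightarrow> real" where "R2 \<tau> = R1 \<tau> + \<tau>"
definition c0 :: "real \<Rightarrow> real \<Rightarrow> real \<Rightarrow> real \<times> real" where
  "c0 T1 T2 \<tau> = (T1 + \<tau>/2 + R1 \<tau>, T2 + \<tau>/2 + R1 \<tau>)"

definition S1a :: "real \<Rightarrow> real \<Rightarrow> real \<Rightarrow> (real \<times> real) set" where
  "S1a T1 T2 \<tau> = {p. T1 + \<tau>/2 < fst p \<and> fst p < T1 + \<tau>/2 + R1 \<tau> \<and>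
     T2 + \<tau>/2 < snd p \<and> snd p < T2 + \<tau>/2 + R1 \<tau> \<and> norm (p - c0 T1 T2 \<tau>) < R1 \<tau>}"
definition S11 :: "real \<Rightarrow> real \<Rightarrow> real \<Rightarrow> (real \<times> real) set" where
  "S11 T1 T2 \<tau> = {p. T1 + \<tau>/2 < fst p \<and> fst p < T1 + \<tau>/2 + R1 \<tau> \<and> snd p > T2 + \<tau>/2 + R1 \<tau>}"
definition S12 :: "real \<Rightarrow> real \<Rightarrow> real \<Rightarrow> (real \<times> real) set" where
  "S12 T1 T2 \<tau> = {p. T2 + \<tau>/2 < snd p \<and> snd p < T2 + \<tau>/2 + R1 \<tau> \<and> fst p > T1 + \<tau>/2 + R1 \<tau>}"
definition S13 :: "real \<Rightarrow> real \<Rightarrow> real \<Rightarrow> (real \<times> real) set" where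
  "S13 T1 T2 \<tau> = {p. fst p > T1 + \<tau>/2 + R1 \<tau> \<and> snd p > T2 + \<tau>/2 + R1 \<tau>}"
definition S0a :: "real \<Rightarrow> real \<Rightarrow> real \<Rightarrow> (real \<times> real) set" where
  "S0a T1 T2 \<tau> = {p. fst p \<le> T1 + \<tau>/2 + R1 \<tau> \<and> snd p \<le> T2 + \<tau>/2 + R1 \<tau> \<and>
     norm (p - c0 T1 T2 \<tau>) > R2 \<tau>}"
definition S01 :: "real \<Rightarrow> real \<Rightarrow> real \<Rightarrow> (real \<times> real) set" where
  "S01 T1 T2 \<tau> = {p. fst p \<le> T1 - \<tau>/2 \<and> snd p > T2 + \<tau>/2 + R1 \<tau>}"
definition S02 :: "real \<Rightarrow> real \<Rightarrow> real \<Rightarrow> (real \<times> real) set" where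
  "S02 T1 T2 \<tau> = {p. snd p \<le> T2 - \<tau>/2 \<and> fst p > T1 + \<tau>/2 + R1 \<tau>}"
definition Sta :: "real \<Rightarrow> real \<Rightarrow> real \<Rightarrow> (real \<times> real) set" where
  "Sta T1 T2 \<tau> = {p. fst p \<le> T1 + \<tau>/2 + R1 \<tau> \<and> snd p \<le> T2 + \<tau>/2 + R1 \<tau> \<and>
     R1 \<tau> \<le> norm (p - c0 T1 T2 \<tau>) \<and> norm (p - c0 T1 T2 \<tau>) \<le> R2 \<tau>}"
definition St1 :: "real \<Rightarrow> real \<Rightarrow> real \<Rightarrow> (real \<times> real) set" where
  "St1 T1 T2 \<tau> = {p. T1 - \<tau>/2 \<le> fst p \<and> fst p \<le> T1 + \<tau>/2 \<and> snd p > T2 + \<tau>/2 + R1 \<tau>}"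
definition St2 :: "real \<Rightarrow> real \<Rightarrow> real \<Rightarrow> (real \<times> real) set" where
  "St2 T1 T2 \<tau> = {p. T2 - \<tau>/2 \<le> snd p \<and> snd p \<le> T2 + \<tau>/2 \<and> fst p > T1 + \<tau>/2 + R1 \<tau>}"

definition Sall :: "real \<Rightarrow> real \<Rightarrow> real \<Rightarrow> (real \<times> real) set" where
  "Sall T1 T2 \<tau> = S1a T1 T2 \<tau> \<union> S11 T1 T2 \<tau> \<union> S12 T1 T2 \<tau> \<union> S13 T1 T2 \<tau>
     \<union> S0a T1 T2 \<tau> \<union> S01 T1 T2 \<tau> \<union> S02 T1 T2 \<tau>
     \<union> Sta T1 T2 \<tau> \<union> St1 T1 T2 \<tau> \<union> St2 T1 T2 \<tau>"

text \<open>The regions are pairwise disjoint (under the hypotheses), so the case order is immaterial;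
outside their union f is given the arbitrary value 0, which is never used.\<close>
definition f_tau :: "real \<Rightarrow> real \<Rightarrow> real \<Rightarrow> real \<times> real \<Rightarrow> real" where
  "f_tau T1 T2 \<tau> p =
    (if p \<in> S1a T1 T2 \<tau> \<union> S11 T1 T2 \<tau> \<union> S12 T1 T2 \<tau> \<union> S13 T1 T2 \<tau> then 1
     else if p \<in> S0a T1 T2 \<tau> \<union> S01 T1 T2 \<tau> \<union> S02 T1 T2 \<tau> then 0
     else if p \<in> Sta T1 T2 \<tau> then (R2 \<tau> - norm (p - c0 T1 T2 \<tau>)) / \<tau>
     else if p \<in> St1 T1 T2 \<tau> then (fst p - (T1 - \<tau>/2)) / \<tau>
     else if p \<in> St2 T1 T2 \<tau> then (snd p - (T2 - \<tau>/2)) / \<tau>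
     else 0)"

end

theory Submission
  imports Defs
begin

definition dQ :: "real \<Rightarrow> real \<Rightarrow> real \<Rightarrow> real \<times> real \<Rightarrow> real" where
  "dQ T1 T2 \<tau> p = sqrt ((max 0 (T1 + \<tau>/2 + R1 \<tau> - fst p))^2 + (max 0 (T2 + \<tau>/2 + R1 \<tau> - snd p))^2)"

definition gQ :: "real \<Rightarrow> real \<Rightarrow> real \<Rightarrow> real \<times> real \<Rightarrow> real" where
  "gQ T1 T2 \<tau> p = max 0 (min 1 ((R2 \<tau> - dQ T1 T2 \<tau> p) / \<tau>))"

lemma norm_pair_eq: "norm (x::real\<times>real) = sqrt ((fst x)^2 + (snd x)^2)"
  by (simp add: norm_prod_def)

lemma sqrt_lip: "\<bar>sqrt (a^2 + b^2) - sqrt (c^2 + d^2)\<bar> \<le> sqrt ((a-c)^2 + (b-d)^2)"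
proof -
  have "\<bar>norm (a,b) - norm (c,d)\<bar> \<le> norm ((a,b) - (c,d))"
    by (rule norm_triangle_ineq3)
  thus ?thesis by (simp add: norm_pair_eq)
qed

lemma max_lip: "\<bar>max 0 (s::real) - max 0 t\<bar> \<le> \<bar>s - t\<bar>" by linarith

lemma dQ_lip: "\<bar>dQ T1 T2 \<tau> x - dQ T1 T2 \<tau> y\<bar> \<le> norm (x - y)"
proof -
  let ?a = "T1 + \<tau>/2 + R1 \<tau>" and ?b = "T2 + \<tau>/2 + R1 \<tau>"
  have "\<bar>dQ T1 T2 \<tau> x - dQ T1 T2 \<tau> y\<bar> \<le>
     sqrt ((max 0 (?a - fst x) - max 0 (?a - fst y))^2 + (max 0 (?b - snd x) - max 0 (?b - snd y))^2)"
    unfolding dQ_def by (rule sqrt_lip)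
  also have "\<dots> \<le> sqrt ((fst x - fst y)^2 + (snd x - snd y)^2)"
  proof (rule real_sqrt_le_mono, rule add_mono)
    show "(max 0 (?a - fst x) - max 0 (?a - fst y))^2 \<le> (fst x - fst y)^2"
      by (subst abs_le_square_iff[symmetric]) linarith
    show "(max 0 (?b - snd x) - max 0 (?b - snd y))^2 \<le> (snd x - snd y)^2"
      by (subst abs_le_square_iff[symmetric]) linarith
  qed
  also have "\<dots> = norm (x - y)" by (simp add: norm_pair_eq)
  finally show ?thesis .
qed

lemma gQ_lip:
  assumes "\<tau> > 0"
  shows "\<bar>gQ T1 T2 \<tau> x - gQ T1 T2 \<tau> y\<bar> \<le> (1/\<tau>) * norm (x - y)"
proof -
  have c: "\<bar>max 0 (min 1 s) - max 0 (min 1 t)\<bar> \<le> \<bar>s - t\<bar>" for s t :: real by linarith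
  have "\<bar>gQ T1 T2 \<tau> x - gQ T1 T2 \<tau> y\<bar> \<le>
     \<bar>(R2 \<tau> - dQ T1 T2 \<tau> x) / \<tau> - (R2 \<tau> - dQ T1 T2 \<tau> y) / \<tau>\<bar>"
    unfolding gQ_def by (rule c)
  also have "\<dots> = \<bar>dQ T1 T2 \<tau> x - dQ T1 T2 \<tau> y\<bar> / \<tau>"
  proof -
    have e: "\<bar>(r - u) / t - (r - v) / t\<bar> = \<bar>u - v\<bar> / t" if "t > 0" for r u v t :: real
    proof -
      have "(r - u) / t - (r - v) / t = (v - u) / t" by (simp add: diff_divide_distrib)
      thus ?thesis using that by (simp add: abs_minus_commute)
    qed
    show ?thesis by (rule e[OF assms])
  qed
  also have "\<dots> \<le> norm (x - y) / \<tau>"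
    using assms dQ_lip by (simp add: divide_right_mono)
  finally show ?thesis by simp
qed

lemma R1_pos: "\<tau> > 0 \<Longrightarrow> R1 \<tau> > 0" by (simp add: R1_def)

lemma dQ_both:
  assumes "fst p \<le> T1 + \<tau>/2 + R1 \<tau>" "snd p \<le> T2 + \<tau>/2 + R1 \<tau>"
  shows "dQ T1 T2 \<tau> p = norm (p - c0 T1 T2 \<tau>)"
proof -
  have "(max 0 (T1 + \<tau>/2 + R1 \<tau> - fst p))^2 = (fst p - (T1 + \<tau>/2 + R1 \<tau>))^2"
    using assms by (simp add: power2_commute)
  moreover have "(max 0 (T2 + \<tau>/2 + R1 \<tau> - snd p))^2 = (snd p - (T2 + \<tau>/2 + R1 \<tau>))^2"
    using assms by (simp add: power2_commute)
  ultimately show ?thesis unfolding dQ_def c0_def norm_pair_eq by simp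
qed

lemma dQ_up:
  assumes "fst p \<le> T1 + \<tau>/2 + R1 \<tau>" "snd p \<ge> T2 + \<tau>/2 + R1 \<tau>"
  shows "dQ T1 T2 \<tau> p = T1 + \<tau>/2 + R1 \<tau> - fst p"
  using assms unfolding dQ_def by simp

lemma dQ_right:
  assumes "fst p \<ge> T1 + \<tau>/2 + R1 \<tau>" "snd p \<le> T2 + \<tau>/2 + R1 \<tau>"
  shows "dQ T1 T2 \<tau> p = T2 + \<tau>/2 + R1 \<tau> - snd p"
  using assms unfolding dQ_def by simp

lemma dQ_in:
  assumes "fst p \<ge> T1 + \<tau>/2 + R1 \<tau>" "snd p \<ge> T2 + \<tau>/2 + R1 \<tau>"
  shows "dQ T1 T2 \<tau> p = 0"
  using assms unfolding dQ_def by simp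

lemma gQ_1: "\<tau> > 0 \<Longrightarrow> dQ T1 T2 \<tau> p \<le> R1 \<tau> \<Longrightarrow> gQ T1 T2 \<tau> p = 1"
  unfolding gQ_def R2_def by (simp add: field_simps)

lemma gQ_0: "\<tau> > 0 \<Longrightarrow> dQ T1 T2 \<tau> p \<ge> R2 \<tau> \<Longrightarrow> gQ T1 T2 \<tau> p = 0"
  unfolding gQ_def R2_def by (simp add: field_simps)

lemma gQ_mid: "\<tau> > 0 \<Longrightarrow> R1 \<tau> \<le> dQ T1 T2 \<tau> p \<Longrightarrow> dQ T1 T2 \<tau> p \<le> R2 \<tau> \<Longrightarrow>
   gQ T1 T2 \<tau> p = (R2 \<tau> - dQ T1 T2 \<tau> p) / \<tau>"
  unfolding gQ_def R2_def by (simp add: field_simps)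

lemma f_eq_g:
  assumes t: "\<tau> > 0" and p: "p \<in> Sall T1 T2 \<tau>"
  shows "f_tau T1 T2 \<tau> p = gQ T1 T2 \<tau> p"
proof -
  have r: "R1 \<tau> > 0" using R1_pos[OF t] .
  have h1: "gQ T1 T2 \<tau> p = 1" if "p \<in> S1a T1 T2 \<tau> \<union> S11 T1 T2 \<tau> \<union> S12 T1 T2 \<tau> \<union> S13 T1 T2 \<tau>"
  proof (rule gQ_1[OF t])
    show "dQ T1 T2 \<tau> p \<le> R1 \<tau>"
      using that r dQ_both[where p=p and ?T1.0=T1 and ?T2.0=T2 and \<tau>=\<tau>] dQ_up[where p=p and ?T1.0=T1 and ?T2.0=T2 and \<tau>=\<tau>] dQ_right[where p=p and ?T1.0=T1 and ?T2.0=T2 and \<tau>=\<tau>] dQ_in[where p=p and ?T1.0=T1 and ?T2.0=T2 and \<tau>=\<tau>]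
      unfolding S1a_def S11_def S12_def S13_def by auto
  qed
  have h0: "gQ T1 T2 \<tau> p = 0" if "p \<in> S0a T1 T2 \<tau> \<union> S01 T1 T2 \<tau> \<union> S02 T1 T2 \<tau>"
  proof (rule gQ_0[OF t])
    show "dQ T1 T2 \<tau> p \<ge> R2 \<tau>"
      using that r t dQ_both[where p=p and ?T1.0=T1 and ?T2.0=T2 and \<tau>=\<tau>] dQ_up[where p=p and ?T1.0=T1 and ?T2.0=T2 and \<tau>=\<tau>] dQ_right[where p=p and ?T1.0=T1 and ?T2.0=T2 and \<tau>=\<tau>]
      unfolding S0a_def S01_def S02_def R2_def by auto
  qed
  have ha: "gQ T1 T2 \<tau> p = (R2 \<tau> - norm (p - c0 T1 T2 \<tau>)) / \<tau>" if "p \<in> Sta T1 T2 \<tau>"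
    using that gQ_mid[OF t, of T1 T2 p] dQ_both[where p=p and ?T1.0=T1 and ?T2.0=T2 and \<tau>=\<tau>] unfolding Sta_def by auto
  have hb: "gQ T1 T2 \<tau> p = (fst p - (T1 - \<tau>/2)) / \<tau>" if "p \<in> St1 T1 T2 \<tau>"
  proof -
    have "dQ T1 T2 \<tau> p = T1 + \<tau>/2 + R1 \<tau> - fst p"
      using that r t dQ_up[where p=p and ?T1.0=T1 and ?T2.0=T2 and \<tau>=\<tau>] unfolding St1_def by auto
    moreover have "R1 \<tau> \<le> dQ T1 T2 \<tau> p" "dQ T1 T2 \<tau> p \<le> R2 \<tau>"
      using that calculation unfolding St1_def R2_def by auto
    ultimately show ?thesis using gQ_mid[OF t, of T1 T2 p] unfolding R2_def by (simp add: algebra_simps)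
  qed
  have hc: "gQ T1 T2 \<tau> p = (snd p - (T2 - \<tau>/2)) / \<tau>" if "p \<in> St2 T1 T2 \<tau>"
  proof -
    have "dQ T1 T2 \<tau> p = T2 + \<tau>/2 + R1 \<tau> - snd p"
      using that r t dQ_right[where p=p and ?T1.0=T1 and ?T2.0=T2 and \<tau>=\<tau>] unfolding St2_def by auto
    moreover have "R1 \<tau> \<le> dQ T1 T2 \<tau> p" "dQ T1 T2 \<tau> p \<le> R2 \<tau>"
      using that calculation unfolding St2_def R2_def by auto
    ultimately show ?thesis using gQ_mid[OF t, of T1 T2 p] unfolding R2_def by (simp add: algebra_simps)
  qed
  show ?thesis
    using p h1 h0 ha hb hc unfolding f_tau_def Sall_def by auto
qed

theorem mainTheorem9:
  fixes T1 T2 \<tau> :: real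
  assumes "T1 > 0" and "T2 > 0" and "0 < \<tau>" and "\<tau> < 2 * min T1 T2"
  shows "\<forall>x \<in> Sall T1 T2 \<tau>. \<forall>x' \<in> Sall T1 T2 \<tau>.
           \<bar>f_tau T1 T2 \<tau> x - f_tau T1 T2 \<tau> x'\<bar> \<le> (1 / \<tau>) * norm (x - x')"
  using f_eq_g[OF assms(3)] gQ_lip[OF assms(3)] by simp

end
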